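(* Let $p_A,p_D,p_I\in(0,1)$, $q_A>0$, $q_D>0$, $q_I\ge0$, and set $r_A=p_A/q_A$, $r_D=p_D/q_D$, and (whenever $q_I<\frac12$) $\varepsilon=\Bigl(\frac{1}{r_D}\bigl(\frac{1}{\sqrt{1/2+q_I}}-1\bigr)\Bigr)^{-1/2}$. Let $J_A,J_D,J_I$ be the functions defined in the context, and consider the two three-player games on strategy sets $\alpha\in(0,1]$, $\beta\in(0,1]$, $\gamma\in[0,1]$: Game C (unknown malicious insider): the attacker minimizes $J_A(\alpha,\beta,\gamma)$ over $\alpha$, the defender minimizes $J_D(\alpha,\beta,0)$ over $\beta$, the insider maximizes $J_I(\alpha,\beta,\gamma)$ over $\gamma$; Game D (unknown inadvertent insider): the attacker minimizes $J_A(\alpha,\beta,0)$ over $\alpha$, the defender minimizes $J_D(\alpha,\beta,0)$ over $\beta$, the insider maximizes $J_I(\alpha,\beta,\gamma)$ over $\gamma$. A triple $(\alpha^*,\beta^*,\gamma^* )$ is a Nash equilibrium of a game if $\alpha^*$ minimizes the attacker's objective with $(\beta^*,\gamma^* )$ fixed, $\beta^*$ minimizes the defender's objective with $(\alpha^*,\gamma^* )$ fixed, and $\gamma^*$ maximizes the insider's objective with $(\alpha^*,\beta^* )$ fixed. Then the following hold. For Game C: (C1) if $\frac{r_A}{p_A}=r_D\le1$ and $q_I\le\bigl(\frac{1}{r_A/p_A+1}\bigr)^2-\frac12$, then for every $\beta^*\in[\varepsilon,1]$ the triple $\bigl(\frac{r_D}{\beta^*},\beta^*,1\bigr)$ is a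 Nash equilibrium; (C2) if $\frac{r_A}{p_A}\le1$, $\frac{r_A}{p_A}<r_D$ and $q_I\le\bigl(\frac{1}{r_A/p_A+1}\bigr)^2-\frac12$, then $\bigl(\frac{r_A}{p_A},1,1\bigr)$ is a Nash equilibrium. For Game D: (D1) if $r_A=r_D\le1$ and $q_I\le\bigl(\frac{1}{r_A+1}\bigr)^2-\frac12$, then for every $\beta^*\in[\varepsilon,1]$ the triple $\bigl(\frac{r_D}{\beta^*},\beta^*,1\bigr)$ is a Nash equilibrium; (D2) if $r_A\le1$, $r_A<r_D$ and $q_I\le\bigl(\frac{1}{r_A+1}\bigr)^2-\frac12$, then $(r_A,1,1)$ is a Nash equilibrium. For each of Game C and Game D: (i) if $r_A=r_D\le1$ and $q_I>\bigl(\frac1{r_A+1}\bigr)^2-\frac12$, then $\bigl(\frac{r_D}{\beta^*},\beta^*,0\bigr)$ is a Nash equilibrium for every $\beta^*\in[r_D,1]$; (ii) if $r_A=r_D\le1$ and $q_I\le\bigl(\frac1{r_A+1}\bigr)^2-\frac12$, then $\bigl(\frac{r_D}{\beta^*},\beta^*,0\bigr)$ is a Nash equilibrium for every $\beta^*\in[r_D,\varepsilon]$; (iii) if $r_A\le1$, $r_A<r_D$ and $q_I\ge\bigl(\frac1{r_A+1}\bigr)^2-\frac12$, then $(r_A,1,0)$ is a Nash equilibrium; (iv) if $r_D\le1$ and $r_D<r_A$, then $(1,r_D,0)$ is a Nash equilibrium; (v) if $r_A>1$ and $r_D>1$, then $(1,1,0)$ is a Nash equilibrium.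
   Context: For $\alpha,\beta\in(0,1]$ let $x(t)=\frac{\alpha}{\alpha+\beta}\bigl(1-e^{-(\alpha+\beta)t}\bigr)$, the solution of $\dot x=\alpha(1-x)-\beta x$, $x(0)=0$ (fraction of compromised resources). For $\gamma\in[0,1]$ define $J_A(\alpha,\beta,\gamma)=\lim_{T\to\infty}\frac1T\int_0^T\bigl[p_A(1-\gamma)^2+q_A\alpha^2+\gamma^2\bigr](1-x(t))^2\,dt$, $J_D(\alpha,\beta,\gamma)=\lim_{T\to\infty}\frac1T\int_0^T\bigl[p_D(1-\gamma)^2+q_D\beta^2+\gamma^2\bigr]x(t)^2\,dt$, $J_I(\alpha,\beta,\gamma)=\lim_{T\to\infty}\frac1T\int_0^T\bigl[(p_I+\gamma^2)(1-x(t))^2-(q_I\gamma+\tfrac12\gamma^2)\bigr]dt$. Here $\alpha$ is the attacker's strategy, $\beta$ the defender's, $\gamma$ the insider's. The paper phrases the conclusion as these equilibrium defense strategies $\beta^*$ being "acceptable solutions" to the defense problem with unknown insider threats. *)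

theory Defs
  imports "HOL-Analysis.Analysis"
begin

text \<open>Fraction of compromised resources: solution of x' = a(1-x) - b x, x(0)=0.\<close>
definition xfrac :: "real \<Rightarrow> real \<Rightarrow> real \<Rightarrow> real" where
  "xfrac a b t = a / (a + b) * (1 - exp (- (a + b) * t))"

definition time_avg :: "(real \<Rightarrow> real) \<Rightarrow> real" where
  "time_avg f = Lim at_top (\<lambda>T. (1 / T) * integral {0..T} f)"

definition JA :: "real \<Rightarrow> real \<Rightarrow> real \<Rightarrow> real \<Rightarrow> real \<Rightarrow> real" where
  "JA pA qA a b g = time_avg (\<lambda>t. (pA * (1 - g)^2 + qA * a^2 + g^2) * (1 - xfrac a b t)^2)"

definition JD :: "real \<Rightarrow> real \<Rightarrow> real \<Rightarrow> real \<Rightarrow> real \<Rightarrow> real" where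
  "JD pD qD a b g = time_avg (\<lambda>t. (pD * (1 - g)^2 + qD * b^2 + g^2) * (xfrac a b t)^2)"

definition JI :: "real \<Rightarrow> real \<Rightarrow> real \<Rightarrow> real \<Rightarrow> real \<Rightarrow> real" where
  "JI pI qI a b g = time_avg (\<lambda>t. (pI + g^2) * (1 - xfrac a b t)^2 - (qI * g + g^2 / 2))"

definition is_NE ::
  "(real \<Rightarrow> real \<Rightarrow> real \<Rightarrow> real) \<Rightarrow> (real \<Rightarrow> real \<Rightarrow> real \<Rightarrow> real) \<Rightarrow>
   (real \<Rightarrow> real \<Rightarrow> real \<Rightarrow> real) \<Rightarrow> real \<Rightarrow> real \<Rightarrow> real \<Rightarrow> bool" where
  "is_NE fA fD fI a b g \<longleftrightarrow>
     a \<in> {0<..1} \<and> b \<in> {0<..1} \<and> g \<in> {0..1} \<and>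
     (\<forall>a' \<in> {0<..1}. fA a b g \<le> fA a' b g) \<and>
     (\<forall>b' \<in> {0<..1}. fD a b g \<le> fD a b' g) \<and>
     (\<forall>g' \<in> {0..1}. fI a b g' \<le> fI a b g)"

definition gameC_NE :: "real \<Rightarrow> real \<Rightarrow> real \<Rightarrow> real \<Rightarrow> real \<Rightarrow> real \<Rightarrow> real \<Rightarrow> real \<Rightarrow> real \<Rightarrow> bool" where
  "gameC_NE pA qA pD qD pI qI a b g =
     is_NE (\<lambda>a b g. JA pA qA a b g) (\<lambda>a b g. JD pD qD a b 0) (\<lambda>a b g. JI pI qI a b g) a b g"

definition gameD_NE :: "real \<Rightarrow> real \<Rightarrow> real \<Rightarrow> real \<Rightarrow> real \<Rightarrow> real \<Rightarrow> real \<Rightarrow> real \<Rightarrow> real \<Rightarrow> bool" where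
  "gameD_NE pA qA pD qD pI qI a b g =
     is_NE (\<lambda>a b g. JA pA qA a b 0) (\<lambda>a b g. JD pD qD a b 0) (\<lambda>a b g. JI pI qI a b g) a b g"

definition eps_thr :: "real \<Rightarrow> real \<Rightarrow> real" where
  "eps_thr rD qI = ((1 / rD) * (1 / sqrt (1/2 + qI) - 1)) powr (-1/2)"

end

theory Submission
  imports Defs "HOL-Real_Asymp.Real_Asymp"
begin

lemma tavg_exp:
  fixes A B C k :: real
  assumes k: "k > 0"
  shows "time_avg (\<lambda>t. A + B * exp (-k*t) + C * (exp (-k*t))^2) = A"
proof -
  let ?F = "\<lambda>t::real. A*t - B * exp (-k*t) / k - C * (exp (-k*t))^2 / (2*k)"
  have int: "integral {0..T} (\<lambda>t. A + B * exp (-k*t) + C * (exp (-k*t))^2) = ?F T - ?F 0"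
    if T: "T \<ge> 0" for T
  proof -
    have "((\<lambda>t. A + B * exp (-k*t) + C * (exp (-k*t))^2) has_integral ?F T - ?F 0) {0..T}"
    proof (rule fundamental_theorem_of_calculus[OF T])
      fix x assume "x \<in> {0..T}"
      have "(?F has_real_derivative A + B * exp (-k*x) + C * (exp (-k*x))^2) (at x within {0..T})"
        using k by (auto intro!: derivative_eq_intros simp: field_simps power2_eq_square)
      then show "(?F has_vector_derivative A + B * exp (-k*x) + C * (exp (-k*x))^2) (at x within {0..T})"
        by (simp add: has_real_derivative_iff_has_vector_derivative)
    qed
    then show ?thesis by (rule integral_unique)
  qed
  have ev: "\<forall>\<^sub>F T in at_top. A + (B/k + C/(2*k)) / T - (B * exp (-k*T) / k + C * (exp (-k*T))^2 / (2*k)) / T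
      = (1 / T) * integral {0..T} (\<lambda>t. A + B * exp (-k*t) + C * (exp (-k*t))^2)"
    using eventually_gt_at_top[of 0]
  proof eventually_elim
    case (elim T)
    then show ?case using k by (subst int) (auto simp: field_simps)
  qed
  have lim: "((\<lambda>T. A + (B/k + C/(2*k)) / T - (B * exp (-k*T) / k + C * (exp (-k*T))^2 / (2*k)) / T) \<longlongrightarrow> A) at_top"
    using k by real_asymp
  have "((\<lambda>T. (1 / T) * integral {0..T} (\<lambda>t. A + B * exp (-k*t) + C * (exp (-k*t))^2)) \<longlongrightarrow> A) at_top"
    using tendsto_cong[OF ev] lim by blast
  then show ?thesis unfolding time_avg_def by (intro tendsto_Lim) auto
qed

lemma aux1: "(a::real) + b \<noteq> 0 \<Longrightarrow> 1 - a/(a+b)*(1-e) = b/(a+b)+a/(a+b)*e"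
  by (simp add: divide_simps) (simp add: algebra_simps)

lemma one_minus_x: "a > 0 \<Longrightarrow> b > 0 \<Longrightarrow> 1 - xfrac a b t = b/(a+b) + a/(a+b) * exp (- (a+b) * t)"
  unfolding xfrac_def by (rule aux1) simp

lemma x_eq: "xfrac a b t = a/(a+b) - a/(a+b) * exp (- (a+b) * t)"
  unfolding xfrac_def by (simp add: right_diff_distrib)

lemma JA_val:
  assumes "a > 0" "b > 0"
  shows "JA pA qA a b g = (pA * (1 - g)^2 + qA * a^2 + g^2) * (b/(a+b))^2"
proof -
  define K where "K = pA * (1 - g)^2 + qA * a^2 + g^2"
  have "(\<lambda>t. K * (1 - xfrac a b t)^2) =
    (\<lambda>t. K * (b/(a+b))^2 + (2*K*(b/(a+b))*(a/(a+b))) * exp (- (a+b) * t) + (K*(a/(a+b))^2) * (exp (- (a+b) * t))^2)"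
    by (rule ext, simp only: one_minus_x[OF assms] K_def[symmetric]) (simp add: power2_eq_square algebra_simps)
  note eq = this
  show ?thesis unfolding JA_def K_def[symmetric] eq by (rule tavg_exp) (use assms in simp) 
qed

lemma JD_val:
  assumes "a > 0" "b > 0"
  shows "JD pD qD a b g = (pD * (1 - g)^2 + qD * b^2 + g^2) * (a/(a+b))^2"
proof -
  define K where "K = pD * (1 - g)^2 + qD * b^2 + g^2"
  have "(\<lambda>t. K * (xfrac a b t)^2) =
    (\<lambda>t. K * (a/(a+b))^2 + (-2*K*(a/(a+b))^2) * exp (- (a+b) * t) + (K*(a/(a+b))^2) * (exp (- (a+b) * t))^2)"
    by (rule ext, simp only: x_eq K_def[symmetric]) (simp add: power2_eq_square algebra_simps)
  note eq = this
  show ?thesis unfolding JD_def K_def[symmetric] eq by (rule tavg_exp) (use assms in simp) 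
qed

lemma JI_val:
  assumes "a > 0" "b > 0"
  shows "JI pI qI a b g = (pI + g^2) * (b/(a+b))^2 - (qI * g + g^2 / 2)"
proof -
  define K where "K = pI + g^2"
  define D where "D = qI * g + g^2 / 2"
  have "(\<lambda>t. K * (1 - xfrac a b t)^2 - D) =
    (\<lambda>t. (K * (b/(a+b))^2 - D) + (2*K*(b/(a+b))*(a/(a+b))) * exp (- (a+b) * t) + (K*(a/(a+b))^2) * (exp (- (a+b) * t))^2)"
    by (rule ext, simp only: one_minus_x[OF assms] K_def[symmetric] D_def[symmetric]) (simp add: power2_eq_square algebra_simps)
  note eq = this
  show ?thesis unfolding JI_def K_def[symmetric] D_def[symmetric] eq by (rule tavg_exp) (use assms in simp)
qed

lemma att_min:
  fixes P Q a b c :: real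
  assumes "P > 0" "Q > 0" "b > 0" "a > 0" "Q*a*b = P" "c > 0"
  shows "(P + Q*a^2)*(b/(a+b))^2 \<le> (P + Q*c^2)*(b/(c+b))^2"
proof -
  have key: "(P + Q*a^2)*(c+b)^2 \<le> (P + Q*c^2)*(a+b)^2"
  proof -
    have "(P + Q*c^2)*(a+b)^2 - (P + Q*a^2)*(c+b)^2 = Q*(a+b)*(b*(a-c)^2)"
      using assms(5)[symmetric] by (simp add: power2_eq_square algebra_simps)
    also have "\<dots> \<ge> 0" using assms by simp
    finally show ?thesis by simp
  qed
  have "(P + Q*a^2)*(b/(a+b))^2 = (P + Q*a^2)*(c+b)^2 * b^2 / ((a+b)^2*(c+b)^2)"
    using assms by (simp add: field_simps)
  also have "\<dots> \<le> (P + Q*c^2)*(a+b)^2 * b^2 / ((a+b)^2*(c+b)^2)"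
    using key assms by (intro divide_right_mono mult_right_mono) auto
  also have "\<dots> = (P + Q*c^2)*(b/(c+b))^2"
    using assms by (simp add: field_simps)
  finally show ?thesis .
qed

lemma att_bd:
  fixes P Q b c :: real
  assumes "P > 0" "Q > 0" "b > 0" "P \<ge> Q*b" "c > 0" "c \<le> 1"
  shows "(P + Q*1^2)*(b/(1+b))^2 \<le> (P + Q*c^2)*(b/(c+b))^2"
proof -
  have key: "(P + Q)*(c+b)^2 \<le> (P + Q*c^2)*(1+b)^2"
  proof -
    have "(P + Q*c^2)*(1+b)^2 - (P + Q)*(c+b)^2 = (1-c)*(P*(1+c+2*b) - Q*b*(2*c+c*b+b))"
      by (simp add: power2_eq_square algebra_simps)
    moreover have "P*(1+c+2*b) \<ge> Q*b*(1+c+2*b)" using assms by (intro mult_right_mono) auto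
    moreover have "Q*b*(1+c+2*b) \<ge> Q*b*(2*c+c*b+b)"
    proof -
      have "(1+c+2*b) - (2*c+c*b+b) = (1+b)*(1-c)" by (simp add: algebra_simps)
      then have "(1+c+2*b) \<ge> (2*c+c*b+b)" using assms by (smt (verit) mult_nonneg_nonneg)
      then show ?thesis using assms by (intro mult_left_mono) auto
    qed
    ultimately have "(P + Q*c^2)*(1+b)^2 - (P + Q)*(c+b)^2 \<ge> 0" using assms by (simp only:) (intro mult_nonneg_nonneg; linarith)
    then show ?thesis by simp
  qed
  have "(P + Q*1^2)*(b/(1+b))^2 = (P + Q)*(c+b)^2 * b^2 / ((1+b)^2*(c+b)^2)"
    using assms by (simp add: field_simps)
  also have "\<dots> \<le> (P + Q*c^2)*(1+b)^2 * b^2 / ((1+b)^2*(c+b)^2)"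
    using key assms by (intro divide_right_mono mult_right_mono) auto
  also have "\<dots> = (P + Q*c^2)*(b/(c+b))^2"
    using assms by (simp add: field_simps)
  finally show ?thesis .
qed

lemma ins1:
  fixes s qI pI g :: real
  assumes "qI \<le> s - 1/2" "g \<in> {0..1}" "qI \<ge> 0"
  shows "(pI + g^2) * s - (qI * g + g^2 / 2) \<le> (pI + 1^2) * s - (qI * 1 + 1^2 / 2)"
proof -
  have "g^2 \<le> g" using assms by (simp add: power2_eq_square mult_left_le_one_le)
  have "g^2 * (s - 1/2) \<le> g * (s - 1/2)" using \<open>g^2 \<le> g\<close> assms by (intro mult_right_mono) auto
  moreover have "g * (s - 1/2 - qI) \<le> 1 * (s - 1/2 - qI)" using assms by (intro mult_right_mono) auto
  ultimately show ?thesis by (simp add: algebra_simps)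
qed

lemma ins0:
  fixes s qI pI g :: real
  assumes "qI \<ge> s - 1/2" "qI \<ge> 0" "g \<in> {0..1}"
  shows "(pI + g^2) * s - (qI * g + g^2 / 2) \<le> (pI + 0^2) * s - (qI * 0 + 0^2 / 2)"
proof (cases "s \<ge> 1/2")
  case True
  have "g^2 \<le> g" using assms by (simp add: power2_eq_square mult_left_le_one_le)
  have "g^2 * (s - 1/2) \<le> g * (s - 1/2)" using \<open>g^2 \<le> g\<close> True by (intro mult_right_mono) auto
  moreover have "g * (s - 1/2 - qI) \<le> 0" using assms by (intro mult_nonneg_nonpos) auto
  ultimately show ?thesis by (simp add: algebra_simps)
next
  case False
  have "g^2 * (s - 1/2) \<le> 0" using False by (intro mult_nonneg_nonpos) auto
  moreover have "qI * g \<ge> 0" using assms by auto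
  ultimately show ?thesis by (simp add: algebra_simps)
qed

lemma eps_sq:
  fixes x :: real assumes "x > 0" shows "(x powr (-1/2))^2 = 1/x"
proof -
  have "(x powr (-1/2))^2 = x powr (-1/2) * x powr (-1/2)" by (simp add: power2_eq_square)
  also have "\<dots> = x powr (-1/2 + -1/2)" by (rule powr_add[symmetric])
  also have "\<dots> = 1/x" using assms by (simp add: powr_minus_divide)
  finally show ?thesis .
qed

lemma eps_facts:
  fixes rD qI :: real
  assumes "rD > 0" "rD \<le> 1" "qI \<ge> 0" "qI \<le> (1/(rD+1))^2 - 1/2"
  defines "K \<equiv> 1 / sqrt (1/2 + qI) - 1"
  shows "K > 0" "K \<ge> rD" "K < 1" "(eps_thr rD qI)^2 = rD / K" "eps_thr rD qI > 0"
    "rD < eps_thr rD qI" "eps_thr rD qI \<le> 1"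
proof -
  define \<sigma> where "\<sigma> = sqrt (1/2 + qI)"
  have s2: "\<sigma>^2 = 1/2 + qI" unfolding \<sigma>_def using assms by simp
  have sp: "\<sigma> > 0" unfolding \<sigma>_def using assms by simp
  have "\<sigma>^2 \<le> (1/(rD+1))^2" using s2 assms by simp
  moreover have "0 \<le> 1/(rD+1)" using assms by simp
  ultimately have sle: "\<sigma> \<le> 1/(rD+1)" by (rule power2_le_imp_le)
  have sgt: "\<sigma> > 1/2"
  proof -
    have "(1/2)^2 < \<sigma>^2" using s2 assms by (simp add: power2_eq_square)
    then show ?thesis by (rule power2_less_imp_less) (use sp in simp)
  qed
  have Ks: "K = 1/\<sigma> - 1" unfolding K_def \<sigma>_def by simp
  have "1/\<sigma> \<ge> rD + 1" using sle sp assms by (simp add: field_simps)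
  then show K1: "K \<ge> rD" using Ks by simp
  show K0: "K > 0" using K1 assms(1) by linarith
  have "1/\<sigma> < 2" using sgt sp by (simp add: field_simps)
  then show K2: "K < 1" using Ks by simp
  have e: "eps_thr rD qI = (K / rD) powr (-1/2)" unfolding eps_thr_def K_def by simp
  show es: "(eps_thr rD qI)^2 = rD / K" unfolding e using eps_sq[of "K/rD"] K0 assms(1) by simp
  show ep: "eps_thr rD qI > 0" unfolding e using K0 assms(1) by simp
  have "rD^2 < rD / K"
  proof -
    have "rD^2 \<le> rD" using assms by (simp add: power2_eq_square mult_left_le_one_le)
    also have "rD < rD / K" using K0 K2 assms(1) by (simp add: field_simps)
    finally show ?thesis .
  qed
  then have "rD^2 < (eps_thr rD qI)^2" using es by simp
  then show "rD < eps_thr rD qI" by (rule power2_less_imp_less) (use ep in simp)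
  have "rD / K \<le> 1" using K0 K1 by simp
  then have "(eps_thr rD qI)^2 \<le> 1^2" using es by simp
  then show "eps_thr rD qI \<le> 1" by (rule power2_le_imp_le) simp
qed

lemma s_form:
  fixes b rD :: real
  assumes "b > 0" "rD > 0" shows "(b/(rD/b+b))^2 = (b^2/(rD+b^2))^2"
proof -
  have "rD/b + b = (rD + b^2)/b" using assms by (simp add: field_simps power2_eq_square)
  then have "b/(rD/b+b) = b^2/(rD+b^2)" using assms by (simp add: power2_eq_square)
  then show ?thesis by simp
qed

lemma s_cmp:
  fixes rD qI b :: real
  assumes "rD > 0" "qI \<ge> 0" "qI < 1/2" "b > 0"
  defines "K \<equiv> 1 / sqrt (1/2 + qI) - 1"
  shows "rD / K \<le> b^2 \<Longrightarrow> qI \<le> (b/(rD/b+b))^2 - 1/2"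
    and "b^2 \<le> rD / K \<Longrightarrow> qI \<ge> (b/(rD/b+b))^2 - 1/2"
proof -
  define \<sigma> where "\<sigma> = sqrt (1/2 + qI)"
  have s2: "\<sigma>^2 = 1/2 + qI" unfolding \<sigma>_def using assms by simp
  have sp: "\<sigma> > 0" unfolding \<sigma>_def using assms by simp
  have s1: "\<sigma> < 1" unfolding \<sigma>_def using assms by simp
  have Ks: "K = (1 - \<sigma>)/\<sigma>" unfolding K_def \<sigma>_def using sp \<sigma>_def by (simp add: field_simps)
  have K0: "K > 0" using Ks sp s1 by simp
  define t where "t = b^2/(rD+b^2)"
  have pos: "rD + b^2 > 0" using assms by (simp add: add_pos_pos)
  have tp: "t > 0" unfolding t_def using assms by (simp add: add_pos_pos)
  have st: "(b/(rD/b+b))^2 = t^2" unfolding t_def using s_form assms by simp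
  have eqv: "rD / K \<le> b^2 \<longleftrightarrow> \<sigma> \<le> t"
  proof -
    have KS: "b^2*K*\<sigma> = b^2*(1-\<sigma>)" using Ks sp by simp
    have "rD / K \<le> b^2 \<longleftrightarrow> rD \<le> b^2 * K" using K0 by (simp add: pos_divide_le_eq)
    also have "\<dots> \<longleftrightarrow> rD * \<sigma> \<le> b^2 * K * \<sigma>" using sp by simp
    also have "\<dots> \<longleftrightarrow> rD * \<sigma> \<le> b^2 * (1 - \<sigma>)" by (simp only: KS)
    also have "\<dots> \<longleftrightarrow> \<sigma> * (rD + b^2) \<le> b^2" by (simp add: algebra_simps)
    also have "\<dots> \<longleftrightarrow> \<sigma> \<le> t" unfolding t_def using pos by (simp add: pos_le_divide_eq algebra_simps)
    finally show ?thesis .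
  qed
  have eqv2: "b^2 \<le> rD / K \<longleftrightarrow> t \<le> \<sigma>"
  proof -
    have KS: "b^2*K*\<sigma> = b^2*(1-\<sigma>)" using Ks sp by simp
    have "b^2 \<le> rD / K \<longleftrightarrow> b^2 * K \<le> rD" using K0 by (simp add: pos_le_divide_eq)
    also have "\<dots> \<longleftrightarrow> b^2 * K * \<sigma> \<le> rD * \<sigma>" using sp by simp
    also have "\<dots> \<longleftrightarrow> b^2 * (1 - \<sigma>) \<le> rD * \<sigma>" by (simp only: KS)
    also have "\<dots> \<longleftrightarrow> b^2 \<le> \<sigma> * (rD + b^2)" by (simp add: algebra_simps)
    also have "\<dots> \<longleftrightarrow> t \<le> \<sigma>" unfolding t_def using pos by (simp add: pos_divide_le_eq algebra_simps)
    finally show ?thesis .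
  qed
  show "qI \<le> (b/(rD/b+b))^2 - 1/2" if "rD / K \<le> b^2"
  proof -
    have "\<sigma>^2 \<le> t^2" using eqv that sp by (intro power_mono) auto
    then show ?thesis using st s2 by simp
  qed
  show "qI \<ge> (b/(rD/b+b))^2 - 1/2" if "b^2 \<le> rD / K"
  proof -
    have "t^2 \<le> \<sigma>^2" using eqv2 that tp by (intro power_mono) auto
    then show ?thesis using st s2 by simp
  qed
qed

lemma def_min:
  fixes P Q a b c :: real
  assumes "P > 0" "Q > 0" "a > 0" "b > 0" "Q*b*a = P" "c > 0"
  shows "(P + Q*b^2)*(a/(a+b))^2 \<le> (P + Q*c^2)*(a/(a+c))^2"
  using att_min[of P Q a b c] assms by (simp add: ac_simps)

lemma def_bd:
  fixes P Q a c :: real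
  assumes "P > 0" "Q > 0" "a > 0" "P \<ge> Q*a" "c > 0" "c \<le> 1"
  shows "(P + Q*1^2)*(a/(a+1))^2 \<le> (P + Q*c^2)*(a/(a+c))^2"
  using att_bd[of P Q a c] assms by (simp add: ac_simps)

lemma half_lem:
  fixes x :: real assumes "0 < x" "x \<le> 1" shows "x/(1+x) \<le> 1/2"
proof -
  have p: "1 + x > 0" using assms by simp
  have "x \<le> 1/2 * (1+x)" using assms by simp
  then show ?thesis using pos_divide_le_eq[OF p] by simp
qed

context
  fixes pA pD pI qA qD qI :: real
  assumes ps: "0 < pA" "pA < 1" "0 < pD" "pD < 1" "0 < pI" "pI < 1" "0 < qA" "0 < qD" "0 \<le> qI"
begin

lemma gen0:
  fixes a b :: real
  assumes a: "0<a" "a\<le>1" and b: "0<b" "b\<le>1"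
  and hA: "\<And>u. 0<u \<Longrightarrow> u \<le> 1 \<Longrightarrow> (pA + qA*a^2)*(b/(a+b))^2 \<le> (pA + qA* u^2)*(b/(u+b))^2"
  and hD: "\<And>v. 0<v \<Longrightarrow> v \<le> 1 \<Longrightarrow> (pD + qD*b^2)*(a/(a+b))^2 \<le> (pD + qD* v^2)*(a/(a+v))^2"
  and hI: "qI \<ge> (b/(a+b))^2 - 1/2"
  shows "gameC_NE pA qA pD qD pI qI a b 0 \<and> gameD_NE pA qA pD qD pI qI a b 0"
proof -
  have A: "\<forall>u\<in>{0<..1}. JA pA qA a b 0 \<le> JA pA qA u b 0"
  proof
    fix u :: real assume "u \<in> {0<..1}"
    then show "JA pA qA a b 0 \<le> JA pA qA u b 0" using hA[of u] by (simp add: JA_val a b)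
  qed
  have D: "\<forall>v\<in>{0<..1}. JD pD qD a b 0 \<le> JD pD qD a v 0"
  proof
    fix v :: real assume "v \<in> {0<..1}"
    then show "JD pD qD a b 0 \<le> JD pD qD a v 0" using hD[of v] by (simp add: JD_val a b)
  qed
  have I: "\<forall>w\<in>{0..1}. JI pI qI a b w \<le> JI pI qI a b 0"
  proof
    fix w :: real assume w: "w \<in> {0..1}"
    show "JI pI qI a b w \<le> JI pI qI a b 0" using ins0[OF hI ps(9) w, of pI] by (simp add: JI_val a b)
  qed
  show ?thesis unfolding gameC_NE_def gameD_NE_def is_NE_def using A D I a b by simp
qed

lemma gen1D:
  fixes a b :: real
  assumes a: "0<a" "a\<le>1" and b: "0<b" "b\<le>1"
  and hA: "\<And>u. 0<u \<Longrightarrow> u \<le> 1 \<Longrightarrow> (pA + qA*a^2)*(b/(a+b))^2 \<le> (pA + qA* u^2)*(b/(u+b))^2"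
  and hD: "\<And>v. 0<v \<Longrightarrow> v \<le> 1 \<Longrightarrow> (pD + qD*b^2)*(a/(a+b))^2 \<le> (pD + qD* v^2)*(a/(a+v))^2"
  and hI: "qI \<le> (b/(a+b))^2 - 1/2"
  shows "gameD_NE pA qA pD qD pI qI a b 1"
proof -
  have A: "\<forall>u\<in>{0<..1}. JA pA qA a b 0 \<le> JA pA qA u b 0"
  proof
    fix u :: real assume "u \<in> {0<..1}"
    then show "JA pA qA a b 0 \<le> JA pA qA u b 0" using hA[of u] by (simp add: JA_val a b)
  qed
  have D: "\<forall>v\<in>{0<..1}. JD pD qD a b 0 \<le> JD pD qD a v 0"
  proof
    fix v :: real assume "v \<in> {0<..1}"
    then show "JD pD qD a b 0 \<le> JD pD qD a v 0" using hD[of v] by (simp add: JD_val a b)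
  qed
  have I: "\<forall>w\<in>{0..1}. JI pI qI a b w \<le> JI pI qI a b 1"
  proof
    fix w :: real assume w: "w \<in> {0..1}"
    show "JI pI qI a b w \<le> JI pI qI a b 1" using ins1[OF hI w ps(9), of pI] by (simp add: JI_val a b)
  qed
  show ?thesis unfolding gameD_NE_def is_NE_def using A D I a b by simp
qed

lemma gen1C:
  fixes a b :: real
  assumes a: "0<a" "a\<le>1" and b: "0<b" "b\<le>1"
  and hA: "\<And>u. 0<u \<Longrightarrow> u \<le> 1 \<Longrightarrow> (1 + qA*a^2)*(b/(a+b))^2 \<le> (1 + qA* u^2)*(b/(u+b))^2"
  and hD: "\<And>v. 0<v \<Longrightarrow> v \<le> 1 \<Longrightarrow> (pD + qD*b^2)*(a/(a+b))^2 \<le> (pD + qD* v^2)*(a/(a+v))^2"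
  and hI: "qI \<le> (b/(a+b))^2 - 1/2"
  shows "gameC_NE pA qA pD qD pI qI a b 1"
proof -
  have A: "\<forall>u\<in>{0<..1}. JA pA qA a b 1 \<le> JA pA qA u b 1"
  proof
    fix u :: real assume "u \<in> {0<..1}"
    then show "JA pA qA a b 1 \<le> JA pA qA u b 1" using hA[of u] by (simp add: JA_val a b ac_simps)
  qed
  have D: "\<forall>v\<in>{0<..1}. JD pD qD a b 0 \<le> JD pD qD a v 0"
  proof
    fix v :: real assume "v \<in> {0<..1}"
    then show "JD pD qD a b 0 \<le> JD pD qD a v 0" using hD[of v] by (simp add: JD_val a b)
  qed
  have I: "\<forall>w\<in>{0..1}. JI pI qI a b w \<le> JI pI qI a b 1"
  proof
    fix w :: real assume w: "w \<in> {0..1}"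
    show "JI pI qI a b w \<le> JI pI qI a b 1" using ins1[OF hI w ps(9), of pI] by (simp add: JI_val a b)
  qed
  show ?thesis unfolding gameC_NE_def is_NE_def using A D I a b by simp
qed


lemma case_i_ii:
  fixes b :: real
  assumes eq: "pA/qA = pD/qD" and b: "pD/qD \<le> b" "b \<le> 1"
  and hI: "qI \<ge> (b/((pD/qD)/b+b))^2 - 1/2"
  shows "gameC_NE pA qA pD qD pI qI ((pD/qD)/b) b 0 \<and> gameD_NE pA qA pD qD pI qI ((pD/qD)/b) b 0"
proof -
  have rD: "pD/qD > 0" using ps by simp
  have b0: "b > 0" using rD b by linarith
  have a0: "(pD/qD)/b > 0" using rD b0 by (rule divide_pos_pos)
  have a1: "(pD/qD)/b \<le> 1" using b(1) b0 by (metis divide_le_eq_1_pos)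
  show ?thesis
  proof (rule gen0[OF a0 a1 b0 b(2)])
    fix u :: real assume "0 < u" "u \<le> 1"
    show "(pA + qA*((pD/qD)/b)^2)*(b/((pD/qD)/b+b))^2 \<le> (pA + qA * u^2)*(b/(u+b))^2"
    proof (rule att_min)
      show "qA * (pD/qD/b) * b = pA" using eq b0 ps by (simp add: field_simps)
    qed (use ps b0 a0 \<open>0 < u\<close> in auto)
  next
    fix v :: real assume "0 < v" "v \<le> 1"
    show "(pD + qD*b^2)*((pD/qD)/b/((pD/qD)/b+b))^2 \<le> (pD + qD * v^2)*((pD/qD)/b/((pD/qD)/b+v))^2"
    proof (rule def_min)
      show "qD * b * (pD/qD/b) = pD" using b0 ps by (simp add: field_simps)
    qed (use ps b0 a0 \<open>0 < v\<close> in auto)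
  qed (rule hI)
qed

lemma case_g1:
  fixes b :: real
  assumes rD1: "pD/qD \<le> 1" and hq: "qI \<le> (1/(pD/qD+1))^2 - 1/2"
  and b: "eps_thr (pD/qD) qI \<le> b" "b \<le> 1"
  shows "0 < (pD/qD)/b" "(pD/qD)/b \<le> 1" "0 < b"
    "\<And>v. 0<v \<Longrightarrow> v \<le> 1 \<Longrightarrow> (pD + qD*b^2)*((pD/qD)/b/((pD/qD)/b+b))^2 \<le> (pD + qD * v^2)*((pD/qD)/b/((pD/qD)/b+v))^2"
    "qI \<le> (b/((pD/qD)/b+b))^2 - 1/2"
proof -
  have rD: "pD/qD > 0" using ps by simp
  note E = eps_facts[OF rD rD1 ps(9) hq]
  have b0: "b > 0" using E(5) b by linarith
  show "0 < b" by (rule b0)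
  have a0: "(pD/qD)/b > 0" using rD b0 by (rule divide_pos_pos)
  show "0 < (pD/qD)/b" by (rule a0)
  have "pD/qD \<le> b" using E(6) b by linarith
  then show "(pD/qD)/b \<le> 1" using b0 by (metis divide_le_eq_1_pos)
  show "(pD + qD*b^2)*((pD/qD)/b/((pD/qD)/b+b))^2 \<le> (pD + qD * v^2)*((pD/qD)/b/((pD/qD)/b+v))^2"
    if "0 < v" "v \<le> 1" for v
  proof (rule def_min)
    show "qD * b * (pD/qD/b) = pD" using b0 ps by (simp add: field_simps)
  qed (use ps b0 a0 \<open>0 < v\<close> in auto)
  have qh: "qI < 1/2"
  proof -
    have "(1/(pD/qD+1))^2 < 1^2" using rD by (intro power_strict_mono) (auto simp: field_simps)
    then show ?thesis using hq by simp
  qed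
  have "(eps_thr (pD/qD) qI)^2 \<le> b^2" using b E(5) by (intro power_mono) auto
  then have "(pD/qD) / (1 / sqrt (1/2 + qI) - 1) \<le> b^2" using E(4) by simp
  then show "qI \<le> (b/((pD/qD)/b+b))^2 - 1/2" using s_cmp(1)[OF rD ps(9) qh b0] by simp
qed

lemma caseC1:
  fixes b :: real
  assumes e: "(pA/qA)/pA = pD/qD" and r: "pD/qD \<le> 1" and q: "qI \<le> (1/((pA/qA)/pA+1))^2 - 1/2"
  and b: "b \<in> {eps_thr (pD/qD) qI..1}"
  shows "gameC_NE pA qA pD qD pI qI ((pD/qD)/b) b 1"
proof -
  have q': "qI \<le> (1/(pD/qD+1))^2 - 1/2" using q e by simp
  note G = case_g1[OF r q', of b]
  have bb: "eps_thr (pD/qD) qI \<le> b" "b \<le> 1" using b by auto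
  show ?thesis
  proof (rule gen1C[OF G(1,2)[OF bb] G(3)[OF bb] bb(2) _ G(4)[OF bb] G(5)[OF bb]])
    fix u :: real assume "0 < u" "u \<le> 1"
    show "(1 + qA*((pD/qD)/b)^2)*(b/((pD/qD)/b+b))^2 \<le> (1 + qA * u^2)*(b/(u+b))^2"
    proof (rule att_min)
      have "(pA/qA)/pA = 1/qA" using ps by simp
      then have "pD/qD = 1/qA" using e by simp
      then show "qA * (pD/qD/b) * b = 1" using G(3)[OF bb] ps by (simp add: field_simps)
    qed (use ps G(1)[OF bb] G(3)[OF bb] \<open>0 < u\<close> in auto)
  qed
qed

lemma caseD1:
  fixes b :: real
  assumes e: "pA/qA = pD/qD" and r: "pD/qD \<le> 1" and q: "qI \<le> (1/(pA/qA+1))^2 - 1/2"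
  and b: "b \<in> {eps_thr (pD/qD) qI..1}"
  shows "gameD_NE pA qA pD qD pI qI ((pD/qD)/b) b 1"
proof -
  have q': "qI \<le> (1/(pD/qD+1))^2 - 1/2" using q e by simp
  note G = case_g1[OF r q', of b]
  have bb: "eps_thr (pD/qD) qI \<le> b" "b \<le> 1" using b by auto
  show ?thesis
  proof (rule gen1D[OF G(1,2)[OF bb] G(3)[OF bb] bb(2) _ G(4)[OF bb] G(5)[OF bb]])
    fix u :: real assume "0 < u" "u \<le> 1"
    show "(pA + qA*((pD/qD)/b)^2)*(b/((pD/qD)/b+b))^2 \<le> (pA + qA * u^2)*(b/(u+b))^2"
    proof (rule att_min)
      show "qA * (pD/qD/b) * b = pA" using e G(3)[OF bb] ps by (simp add: field_simps)
    qed (use ps G(1)[OF bb] G(3)[OF bb] \<open>0 < u\<close> in auto)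
  qed
qed

lemma caseC2:
  assumes r: "(pA/qA)/pA \<le> 1" "(pA/qA)/pA < pD/qD" and q: "qI \<le> (1/((pA/qA)/pA+1))^2 - 1/2"
  shows "gameC_NE pA qA pD qD pI qI ((pA/qA)/pA) 1 1"
proof -
  have a0: "(pA/qA)/pA > 0" using ps by simp
  show ?thesis
  proof (rule gen1C[OF a0 r(1)])
    fix u :: real assume "0 < u" "u \<le> 1"
    show "(1 + qA*((pA/qA)/pA)^2)*(1/((pA/qA)/pA+1))^2 \<le> (1 + qA * u^2)*(1/(u+1))^2"
    proof (rule att_min)
      show "qA * ((pA/qA)/pA) * 1 = 1" using ps by (simp add: field_simps)
    qed (use ps a0 \<open>0 < u\<close> in auto)
  next
    fix v :: real assume "0 < v" "v \<le> 1"
    show "(pD + qD*1^2)*((pA/qA)/pA/((pA/qA)/pA+1))^2 \<le> (pD + qD * v^2)*((pA/qA)/pA/((pA/qA)/pA+v))^2"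
    proof (rule def_bd)
      show "pD \<ge> qD * ((pA/qA)/pA)" using r(2) ps by (simp add: field_simps)
    qed (use ps a0 \<open>0 < v\<close> \<open>v \<le> 1\<close> in auto)
  qed (use q in simp_all)
qed

lemma caseD2:
  assumes r: "pA/qA \<le> 1" "pA/qA < pD/qD" and q: "qI \<le> (1/(pA/qA+1))^2 - 1/2"
  shows "gameD_NE pA qA pD qD pI qI (pA/qA) 1 1"
proof -
  have a0: "pA/qA > 0" using ps by simp
  show ?thesis
  proof (rule gen1D[OF a0 r(1)])
    fix u :: real assume "0 < u" "u \<le> 1"
    show "(pA + qA*(pA/qA)^2)*(1/(pA/qA+1))^2 \<le> (pA + qA * u^2)*(1/(u+1))^2"
    proof (rule att_min)
      show "qA * (pA/qA) * 1 = pA" using ps by (simp add: field_simps)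
    qed (use ps a0 \<open>0 < u\<close> in auto)
  next
    fix v :: real assume "0 < v" "v \<le> 1"
    show "(pD + qD*1^2)*(pA/qA/(pA/qA+1))^2 \<le> (pD + qD * v^2)*(pA/qA/(pA/qA+v))^2"
    proof (rule def_bd)
      show "pD \<ge> qD * (pA/qA)" using r(2) ps by (simp add: field_simps)
    qed (use ps a0 \<open>0 < v\<close> \<open>v \<le> 1\<close> in auto)
  qed (use q in simp_all)
qed

lemma case_iii:
  assumes r: "pA/qA \<le> 1" "pA/qA < pD/qD" and q: "qI \<ge> (1/(pA/qA+1))^2 - 1/2"
  shows "gameC_NE pA qA pD qD pI qI (pA/qA) 1 0 \<and> gameD_NE pA qA pD qD pI qI (pA/qA) 1 0"
proof -
  have a0: "pA/qA > 0" using ps by simp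
  show ?thesis
  proof (rule gen0[OF a0 r(1)])
    fix u :: real assume "0 < u" "u \<le> 1"
    show "(pA + qA*(pA/qA)^2)*(1/(pA/qA+1))^2 \<le> (pA + qA * u^2)*(1/(u+1))^2"
    proof (rule att_min)
      show "qA * (pA/qA) * 1 = pA" using ps by (simp add: field_simps)
    qed (use ps a0 \<open>0 < u\<close> in auto)
  next
    fix v :: real assume "0 < v" "v \<le> 1"
    show "(pD + qD*1^2)*(pA/qA/(pA/qA+1))^2 \<le> (pD + qD * v^2)*(pA/qA/(pA/qA+v))^2"
    proof (rule def_bd)
      show "pD \<ge> qD * (pA/qA)" using r(2) ps by (simp add: field_simps)
    qed (use ps a0 \<open>0 < v\<close> \<open>v \<le> 1\<close> in auto)
  qed (use q in simp_all)
qed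

lemma case_iv:
  assumes r: "pD/qD \<le> 1" "pD/qD < pA/qA"
  shows "gameC_NE pA qA pD qD pI qI 1 (pD/qD) 0 \<and> gameD_NE pA qA pD qD pI qI 1 (pD/qD) 0"
proof -
  have b0: "pD/qD > 0" using ps by simp
  show ?thesis
  proof (rule gen0[OF _ _ b0 r(1)])
    fix u :: real assume "0 < u" "u \<le> 1"
    show "(pA + qA*1^2)*(pD/qD/(1+pD/qD))^2 \<le> (pA + qA * u^2)*(pD/qD/(u+pD/qD))^2"
    proof (rule att_bd)
      show "pA \<ge> qA * (pD/qD)" using r(2) ps by (simp add: field_simps)
    qed (use ps b0 \<open>0 < u\<close> \<open>u \<le> 1\<close> in auto)
  next
    fix v :: real assume "0 < v" "v \<le> 1"
    show "(pD + qD*(pD/qD)^2)*(1/(1+pD/qD))^2 \<le> (pD + qD * v^2)*(1/(1+v))^2"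
    proof (rule def_min)
      show "qD * (pD/qD) * 1 = pD" using ps by (simp add: field_simps)
    qed (use ps b0 \<open>0 < v\<close> in auto)
  next
    have "pD/qD/(1+pD/qD) \<le> 1/2" using half_lem b0 r(1) by blast
    moreover have "pD/qD/(1+pD/qD) \<ge> 0"
    proof (rule divide_nonneg_nonneg)
      show "0 \<le> pD/qD" using b0 by (rule less_imp_le)
      show "0 \<le> 1 + pD/qD" using b0 by linarith
    qed
    ultimately have "(pD/qD/(1+pD/qD))^2 \<le> (1/2)^2" by (intro power_mono) auto
    moreover have "(1/2::real)^2 = 1/4" by (simp add: power2_eq_square)
    ultimately show "qI \<ge> (pD/qD/(1+pD/qD))^2 - 1/2" using ps(9) by linarith
  qed simp_all
qed

lemma case_v:
  assumes r: "pA/qA > 1" "pD/qD > 1"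
  shows "gameC_NE pA qA pD qD pI qI 1 1 0 \<and> gameD_NE pA qA pD qD pI qI 1 1 0"
proof (rule gen0)
  fix u :: real assume "0 < u" "u \<le> 1"
  show "(pA + qA*1^2)*(1/(1+1))^2 \<le> (pA + qA * u^2)*(1/(u+1))^2"
  proof (rule att_bd)
    show "pA \<ge> qA * 1" using r(1) ps by (simp add: field_simps)
  qed (use ps \<open>0 < u\<close> \<open>u \<le> 1\<close> in auto)
next
  fix v :: real assume "0 < v" "v \<le> 1"
  show "(pD + qD*1^2)*(1/(1+1))^2 \<le> (pD + qD * v^2)*(1/(1+v))^2"
  proof (rule def_bd)
    show "pD \<ge> qD * 1" using r(2) ps by (simp add: field_simps)
  qed (use ps \<open>0 < v\<close> \<open>v \<le> 1\<close> in auto)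
next
  show "qI \<ge> (1/(1+1))^2 - 1/2" using ps(9) by (simp add: power2_eq_square)
qed simp_all

end

theorem theorem2:
  fixes pA pD pI qA qD qI :: real
  assumes "0 < pA" "pA < 1" "0 < pD" "pD < 1" "0 < pI" "pI < 1"
    and "0 < qA" "0 < qD" "0 \<le> qI"
  shows
   \<comment> \<open>Game C\<close>
   "((pA/qA) / pA = pD/qD \<and> pD/qD \<le> 1 \<and> qI \<le> (1 / ((pA/qA)/pA + 1))^2 - 1/2 \<longrightarrow>
       (\<forall>b \<in> {eps_thr (pD/qD) qI..1}. gameC_NE pA qA pD qD pI qI ((pD/qD) / b) b 1))
  \<and> ((pA/qA) / pA \<le> 1 \<and> (pA/qA) / pA < pD/qD \<and> qI \<le> (1 / ((pA/qA)/pA + 1))^2 - 1/2 \<longrightarrow>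
       gameC_NE pA qA pD qD pI qI ((pA/qA) / pA) 1 1)
   \<comment> \<open>Game D\<close>
  \<and> (pA/qA = pD/qD \<and> pD/qD \<le> 1 \<and> qI \<le> (1 / (pA/qA + 1))^2 - 1/2 \<longrightarrow>
       (\<forall>b \<in> {eps_thr (pD/qD) qI..1}. gameD_NE pA qA pD qD pI qI ((pD/qD) / b) b 1))
  \<and> (pA/qA \<le> 1 \<and> pA/qA < pD/qD \<and> qI \<le> (1 / (pA/qA + 1))^2 - 1/2 \<longrightarrow>
       gameD_NE pA qA pD qD pI qI (pA/qA) 1 1)
   \<comment> \<open>(i)-(v) for both games\<close>
  \<and> (\<forall>NE \<in> {gameC_NE pA qA pD qD pI qI, gameD_NE pA qA pD qD pI qI}.
      (pA/qA = pD/qD \<and> pD/qD \<le> 1 \<and> qI > (1 / (pA/qA + 1))^2 - 1/2 \<longrightarrow>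
         (\<forall>b \<in> {pD/qD..1}. NE ((pD/qD) / b) b 0))
    \<and> (pA/qA = pD/qD \<and> pD/qD \<le> 1 \<and> qI \<le> (1 / (pA/qA + 1))^2 - 1/2 \<longrightarrow>
         (\<forall>b \<in> {pD/qD..eps_thr (pD/qD) qI}. NE ((pD/qD) / b) b 0))
    \<and> (pA/qA \<le> 1 \<and> pA/qA < pD/qD \<and> qI \<ge> (1 / (pA/qA + 1))^2 - 1/2 \<longrightarrow>
         NE (pA/qA) 1 0)
    \<and> (pD/qD \<le> 1 \<and> pD/qD < pA/qA \<longrightarrow> NE 1 (pD/qD) 0)
    \<and> (pA/qA > 1 \<and> pD/qD > 1 \<longrightarrow> NE 1 1 0))"
proof (intro conjI)
  show "(pA/qA) / pA = pD/qD \<and> pD/qD \<le> 1 \<and> qI \<le> (1 / ((pA/qA)/pA + 1))^2 - 1/2 \<longrightarrow>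
       (\<forall>b \<in> {eps_thr (pD/qD) qI..1}. gameC_NE pA qA pD qD pI qI ((pD/qD) / b) b 1)"
    using caseC1[OF assms] by blast
  show "(pA/qA) / pA \<le> 1 \<and> (pA/qA) / pA < pD/qD \<and> qI \<le> (1 / ((pA/qA)/pA + 1))^2 - 1/2 \<longrightarrow>
       gameC_NE pA qA pD qD pI qI ((pA/qA) / pA) 1 1"
    using caseC2[OF assms] by blast
  show "pA/qA = pD/qD \<and> pD/qD \<le> 1 \<and> qI \<le> (1 / (pA/qA + 1))^2 - 1/2 \<longrightarrow>
       (\<forall>b \<in> {eps_thr (pD/qD) qI..1}. gameD_NE pA qA pD qD pI qI ((pD/qD) / b) b 1)"
    using caseD1[OF assms] by blast
  show "pA/qA \<le> 1 \<and> pA/qA < pD/qD \<and> qI \<le> (1 / (pA/qA + 1))^2 - 1/2 \<longrightarrow>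
       gameD_NE pA qA pD qD pI qI (pA/qA) 1 1"
    using caseD2[OF assms] by blast
  show "\<forall>NE \<in> {gameC_NE pA qA pD qD pI qI, gameD_NE pA qA pD qD pI qI}.
      (pA/qA = pD/qD \<and> pD/qD \<le> 1 \<and> qI > (1 / (pA/qA + 1))^2 - 1/2 \<longrightarrow>
         (\<forall>b \<in> {pD/qD..1}. NE ((pD/qD) / b) b 0))
    \<and> (pA/qA = pD/qD \<and> pD/qD \<le> 1 \<and> qI \<le> (1 / (pA/qA + 1))^2 - 1/2 \<longrightarrow>
         (\<forall>b \<in> {pD/qD..eps_thr (pD/qD) qI}. NE ((pD/qD) / b) b 0))
    \<and> (pA/qA \<le> 1 \<and> pA/qA < pD/qD \<and> qI \<ge> (1 / (pA/qA + 1))^2 - 1/2 \<longrightarrow>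
         NE (pA/qA) 1 0)
    \<and> (pD/qD \<le> 1 \<and> pD/qD < pA/qA \<longrightarrow> NE 1 (pD/qD) 0)
    \<and> (pA/qA > 1 \<and> pD/qD > 1 \<longrightarrow> NE 1 1 0)"
  proof (rule ballI)
    fix NE assume NE: "NE \<in> {gameC_NE pA qA pD qD pI qI, gameD_NE pA qA pD qD pI qI}"
    have NEc: "NE a b 0" if "gameC_NE pA qA pD qD pI qI a b 0 \<and> gameD_NE pA qA pD qD pI qI a b 0" for a b
      using NE that by auto
    have rD: "pD/qD > 0" using assms by simp
    have i: "\<forall>b \<in> {pD/qD..1}. NE ((pD/qD) / b) b 0"
      if h: "pA/qA = pD/qD" "pD/qD \<le> 1" "qI > (1 / (pA/qA + 1))^2 - 1/2"
    proof
      fix b assume b: "b \<in> {pD/qD..1}"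
      have b0: "b > 0" using b rD by auto
      have "(b/((pD/qD)/b+b))^2 = (b^2/(pD/qD+b^2))^2" by (rule s_form[OF b0 rD])
      moreover have "b^2/(pD/qD+b^2) \<le> 1/(pD/qD+1)"
      proof -
        have p1: "pD/qD + b^2 > 0" using rD by (intro add_pos_nonneg) auto
        have p2: "pD/qD + 1 > 0" using rD by simp
        have "b^2 \<le> 1" using b b0 by (simp add: power_le_one)
        then have "b^2 * (pD/qD) \<le> 1 * (pD/qD)" using rD by (intro mult_right_mono) auto
        then have "b^2 * (pD/qD + 1) \<le> 1 * (pD/qD + b^2)" by (simp add: algebra_simps)
        then show ?thesis using p1 p2 by (simp add: divide_simps)
      qed
      moreover have "b^2/(pD/qD+b^2) \<ge> 0" using rD by (intro divide_nonneg_nonneg) auto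
      ultimately have "(b/((pD/qD)/b+b))^2 \<le> (1/(pD/qD+1))^2" by (simp add: power_mono)
      then have hI: "qI \<ge> (b/((pD/qD)/b+b))^2 - 1/2" using h by simp
      show "NE ((pD/qD) / b) b 0" using case_i_ii[OF assms h(1) _ _ hI] b by (intro NEc) auto
    qed
    have ii: "\<forall>b \<in> {pD/qD..eps_thr (pD/qD) qI}. NE ((pD/qD) / b) b 0"
      if h: "pA/qA = pD/qD" "pD/qD \<le> 1" "qI \<le> (1 / (pA/qA + 1))^2 - 1/2"
    proof
      fix b assume b: "b \<in> {pD/qD..eps_thr (pD/qD) qI}"
      have hq: "qI \<le> (1/(pD/qD+1))^2 - 1/2" using h by simp
      note E = eps_facts[OF rD h(2) assms(9) hq]
      have b0: "b > 0" using b rD by auto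
      have b1: "b \<le> 1" using b E(7) by auto
      have qh: "qI < 1/2"
      proof -
        have "(1/(pD/qD+1))^2 < 1^2" using rD by (intro power_strict_mono) (auto simp: field_simps)
        then show ?thesis using hq by simp
      qed
      have "b^2 \<le> (eps_thr (pD/qD) qI)^2" using b b0 by (intro power_mono) auto
      then have "b^2 \<le> (pD/qD) / (1 / sqrt (1/2 + qI) - 1)" using E(4) by simp
      then have hI: "qI \<ge> (b/((pD/qD)/b+b))^2 - 1/2" using s_cmp(2)[OF rD assms(9) qh b0] by simp
      show "NE ((pD/qD) / b) b 0" using case_i_ii[OF assms h(1) _ b1 hI] b by (intro NEc) auto
    qed
    show "(pA/qA = pD/qD \<and> pD/qD \<le> 1 \<and> qI > (1 / (pA/qA + 1))^2 - 1/2 \<longrightarrow>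
         (\<forall>b \<in> {pD/qD..1}. NE ((pD/qD) / b) b 0))
    \<and> (pA/qA = pD/qD \<and> pD/qD \<le> 1 \<and> qI \<le> (1 / (pA/qA + 1))^2 - 1/2 \<longrightarrow>
         (\<forall>b \<in> {pD/qD..eps_thr (pD/qD) qI}. NE ((pD/qD) / b) b 0))
    \<and> (pA/qA \<le> 1 \<and> pA/qA < pD/qD \<and> qI \<ge> (1 / (pA/qA + 1))^2 - 1/2 \<longrightarrow>
         NE (pA/qA) 1 0)
    \<and> (pD/qD \<le> 1 \<and> pD/qD < pA/qA \<longrightarrow> NE 1 (pD/qD) 0)
    \<and> (pA/qA > 1 \<and> pD/qD > 1 \<longrightarrow> NE 1 1 0)"
      using i ii NEc[OF case_iii[OF assms]] NEc[OF case_iv[OF assms]] NEc[OF case_v[OF assms]]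
      by blast
  qed
qed

end
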